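(* Let $T$ be a tree with a proper 2-coloring $\chi:V\to\{\mathcal{R},\mathcal{B}\}$. The following are equivalent: (1) $T$ is balanced; (2) any two vertices of the same height have the same color under $\chi$; (3) every leaf has the same color.
   Context: A leaf is a vertex of degree 1; the height of a vertex is its minimum distance to a leaf (an isolated vertex has height 0). $T$ is balanced if no two adjacent vertices have the same height. A proper 2-coloring assigns different colors to adjacent vertices. *)

theory Defs
  imports Main
begin

definition simple_graph :: "'a set \<Rightarrow> ('a \<Rightarrow> 'a \<Rightarrow> bool) \<Rightarrow> bool" where
  "simple_graph V E \<longleftrightarrow> finite V \<and> (\<forall>x y. E x y \<longrightarrow> x \<in> V \<and> y \<in> V)
     \<and> (\<forall>x y. E x y \<longrightarrow> E y x) \<and> (\<forall>x. \<not> E x x)"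

definition walk :: "'a set \<Rightarrow> ('a \<Rightarrow> 'a \<Rightarrow> bool) \<Rightarrow> 'a list \<Rightarrow> bool" where
  "walk V E xs \<longleftrightarrow> xs \<noteq> [] \<and> set xs \<subseteq> V \<and>
     (\<forall>i. Suc i < length xs \<longrightarrow> E (xs ! i) (xs ! Suc i))"

definition connected_graph :: "'a set \<Rightarrow> ('a \<Rightarrow> 'a \<Rightarrow> bool) \<Rightarrow> bool" where
  "connected_graph V E \<longleftrightarrow>
     (\<forall>u\<in>V. \<forall>v\<in>V. \<exists>xs. walk V E xs \<and> hd xs = u \<and> last xs = v)"

definition is_cycle :: "'a set \<Rightarrow> ('a \<Rightarrow> 'a \<Rightarrow> bool) \<Rightarrow> 'a list \<Rightarrow> bool" where
  "is_cycle V E xs \<longleftrightarrow> walk V E xs \<and> length xs \<ge> 3 \<and> distinct xs \<and> E (last xs) (hd xs)"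

definition acyclic_graph :: "'a set \<Rightarrow> ('a \<Rightarrow> 'a \<Rightarrow> bool) \<Rightarrow> bool" where
  "acyclic_graph V E \<longleftrightarrow> \<not> (\<exists>xs. is_cycle V E xs)"

definition tree :: "'a set \<Rightarrow> ('a \<Rightarrow> 'a \<Rightarrow> bool) \<Rightarrow> bool" where
  "tree V E \<longleftrightarrow> simple_graph V E \<and> V \<noteq> {} \<and> connected_graph V E \<and> acyclic_graph V E"

definition degree :: "'a set \<Rightarrow> ('a \<Rightarrow> 'a \<Rightarrow> bool) \<Rightarrow> 'a \<Rightarrow> nat" where
  "degree V E v = card {u \<in> V. E v u}"

definition leaf :: "'a set \<Rightarrow> ('a \<Rightarrow> 'a \<Rightarrow> bool) \<Rightarrow> 'a \<Rightarrow> bool" where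
  "leaf V E v \<longleftrightarrow> v \<in> V \<and> degree V E v = 1"

definition dist :: "'a set \<Rightarrow> ('a \<Rightarrow> 'a \<Rightarrow> bool) \<Rightarrow> 'a \<Rightarrow> 'a \<Rightarrow> nat" where
  "dist V E u v = (LEAST n. \<exists>xs. walk V E xs \<and> hd xs = u \<and> last xs = v \<and> length xs = Suc n)"

text \<open>Height: minimum distance to a leaf; 0 if there is no leaf (isolated vertex).\<close>
definition height :: "'a set \<Rightarrow> ('a \<Rightarrow> 'a \<Rightarrow> bool) \<Rightarrow> 'a \<Rightarrow> nat" where
  "height V E v = (if {l. leaf V E l} = {} then 0 else Min (dist V E v ` {l. leaf V E l}))"

definition balanced :: "'a set \<Rightarrow> ('a \<Rightarrow> 'a \<Rightarrow> bool) \<Rightarrow> bool" where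
  "balanced V E \<longleftrightarrow> (\<forall>u v. E u v \<longrightarrow> height V E u \<noteq> height V E v)"

datatype color = Red | Blue

definition proper_2_coloring :: "'a set \<Rightarrow> ('a \<Rightarrow> 'a \<Rightarrow> bool) \<Rightarrow> ('a \<Rightarrow> color) \<Rightarrow> bool" where
  "proper_2_coloring V E \<chi> \<longleftrightarrow> (\<forall>u v. E u v \<longrightarrow> \<chi> u \<noteq> \<chi> v)"

end

theory Submission
  imports Defs
begin

lemma walk_Cons:
  assumes "xs \<noteq> []"
  shows "walk V E (w # xs) \<longleftrightarrow> w \<in> V \<and> walk V E xs \<and> E w (hd xs)"
proof
  assume a: "walk V E (w # xs)"
  have "Suc 0 < length (w # xs) \<longrightarrow> E ((w # xs) ! 0) ((w # xs) ! Suc 0)" using a unfolding walk_def by blast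
  then have 1: "E w (hd xs)" using assms by (simp add: hd_conv_nth)
  have 2: "walk V E xs" unfolding walk_def
  proof (intro conjI allI impI)
    show "xs \<noteq> []" by fact
    show "set xs \<subseteq> V" using a unfolding walk_def by simp
    fix i assume "Suc i < length xs"
    moreover have "Suc (Suc i) < length (w # xs) \<longrightarrow> E ((w # xs) ! Suc i) ((w # xs) ! Suc (Suc i))" using a unfolding walk_def by blast
    ultimately have "E ((w # xs) ! Suc i) ((w # xs) ! Suc (Suc i))" by simp
    then show "E (xs ! i) (xs ! Suc i)" by simp
  qed
  show "w \<in> V \<and> walk V E xs \<and> E w (hd xs)" using a 1 2 unfolding walk_def by simp
next
  assume a: "w \<in> V \<and> walk V E xs \<and> E w (hd xs)"
  show "walk V E (w # xs)" unfolding walk_def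
  proof (intro conjI allI impI)
    show "w # xs \<noteq> []" by simp
    show "set (w # xs) \<subseteq> V" using a unfolding walk_def by auto
    fix i assume i: "Suc i < length (w # xs)"
    show "E ((w # xs) ! i) ((w # xs) ! Suc i)"
    proof (cases i)
      case 0 then show ?thesis using a assms by (simp add: hd_conv_nth)
    next
      case (Suc k) then show ?thesis using a i unfolding walk_def by auto
    qed
  qed
qed

lemma walk_single: "walk V E [x] \<longleftrightarrow> x \<in> V"
  unfolding walk_def by auto

lemma walk_parity:
  fixes P :: "'a \<Rightarrow> bool"
  assumes "\<And>x y. E x y \<Longrightarrow> P x \<noteq> P y"
  shows "walk V E (x # xs) \<Longrightarrow> (P x = P (last (x # xs))) \<longleftrightarrow> odd (length (x # xs))"
proof (induction xs arbitrary: x)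
  case Nil then show ?case by simp
next
  case (Cons y ys)
  have "E x y" "walk V E (y # ys)" using Cons.prems walk_Cons[of "y#ys" V E x] by auto
  moreover have "(P y = P (last (y # ys))) \<longleftrightarrow> odd (length (y # ys))" using Cons.IH[of y] \<open>walk V E (y # ys)\<close> by blast
  moreover have "P x = (\<not> P y)" using assms[of x y] \<open>E x y\<close> by blast
  moreover have "last (x # y # ys) = last (y # ys)" "length (x # y # ys) = Suc (length (y # ys))" by simp_all
  ultimately show ?case by (simp only: even_Suc) argo
qed

lemma walk_parity':
  fixes P :: "'a \<Rightarrow> bool"
  assumes "\<And>x y. E x y \<Longrightarrow> P x \<noteq> P y" "walk V E ws"
  shows "(P (hd ws) = P (last ws)) \<longleftrightarrow> odd (length ws)"
proof (cases ws)
  case Nil then show ?thesis using assms unfolding walk_def by auto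
next
  case (Cons x xs) then show ?thesis using walk_parity[where P=P and E=E and V=V and x=x and xs=xs, OF assms(1)] assms(2) by simp
qed

lemma walk_take:
  assumes "walk V E xs" "0 < n"
  shows "walk V E (take n xs)"
  using assms unfolding walk_def
  by (auto dest: in_set_takeD)

lemma tree_has_leaf:
  assumes "tree V E" "E a b"
  shows "\<exists>l. leaf V E l"
proof -
  have sg: "simple_graph V E" and fin: "finite V" and ac: "acyclic_graph V E"
    using assms unfolding tree_def simple_graph_def by auto
  have sym: "\<And>x y. E x y \<Longrightarrow> E y x" and irr: "\<And>x. \<not> E x x"
    and inV: "\<And>x y. E x y \<Longrightarrow> x \<in> V \<and> y \<in> V" using sg unfolding simple_graph_def by auto
  let ?P = "\<lambda>xs. walk V E xs \<and> distinct xs"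
  have Pab: "?P [a, b]" using assms(2) inV[OF assms(2)] irr[of a]
    by (auto simp: walk_Cons walk_single)
  have bnd: "\<forall>y. ?P y \<longrightarrow> length y \<le> card V"
  proof (intro allI impI)
    fix y assume "?P y"
    then have "set y \<subseteq> V" "distinct y" unfolding walk_def by auto
    then show "length y \<le> card V" using fin by (metis card_mono distinct_card)
  qed
  obtain xs where xs: "?P xs" and mx: "\<forall>y. ?P y \<longrightarrow> length y \<le> length xs"
  proof -
    have "\<forall>y. ?P y \<longrightarrow> length y < Suc (card V)" using bnd by (simp add: less_Suc_eq_le)
    from Lattices_Big.ex_has_greatest_nat[of ?P "[a,b]" length "Suc (card V)", OF Pab this]
    show ?thesis using that by blast
  qed
  have len: "length xs \<ge> 2" using mx[rule_format, OF Pab] by simp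
  let ?v = "xs ! 0"
  have hdv: "hd xs = ?v" using len by (cases xs) auto
  have xsne: "xs \<noteq> []" using len by auto
  have e01: "E ?v (xs ! 1)" using xs len unfolding walk_def by auto
  have nb: "u = xs ! 1" if "u \<in> V" "E ?v u" for u
  proof (rule ccontr)
    assume ne: "u \<noteq> xs ! 1"
    show False
    proof (cases "u \<in> set xs")
      case False
      have "walk V E (u # xs)" using xs False that sym[OF that(2)] hdv xsne
        by (simp add: walk_Cons)
      then have "?P (u # xs)" using xs False by simp
      then show False using mx[rule_format, of "u # xs"] by simp
    next
      case True
      then obtain j where j: "j < length xs" "xs ! j = u" by (auto simp: in_set_conv_nth)
      have "j \<noteq> 0"
      proof
        assume "j = 0" then have "u = ?v" using j by simp
        then show False using that(2) irr by simp
      qed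
      moreover have "j \<noteq> 1" using ne j by auto
      ultimately have j2: "j \<ge> 2" by linarith
      let ?c = "take (Suc j) xs"
      have "is_cycle V E ?c"
        unfolding is_cycle_def
      proof (intro conjI)
        show "walk V E ?c" using walk_take xs by auto
        show "3 \<le> length ?c" using j j2 by auto
        show "distinct ?c" using xs by auto
        have "last ?c = u" using j by (simp add: take_Suc_conv_app_nth)
        moreover have "hd ?c = ?v" using len by (cases xs) auto
        ultimately show "E (last ?c) (hd ?c)" using sym that by auto
      qed
      then show False using ac unfolding acyclic_graph_def by auto
    qed
  qed
  have "{u \<in> V. E ?v u} = {xs ! 1}"
  proof (intro set_eqI iffI)
    fix u assume "u \<in> {u \<in> V. E ?v u}" then show "u \<in> {xs ! 1}" using nb by blast
  next
    fix u assume "u \<in> {xs ! 1}" then show "u \<in> {u \<in> V. E ?v u}" using e01 inV by blast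
  qed
  moreover have "?v \<in> V" using inV e01 by auto
  ultimately have "leaf V E ?v" unfolding leaf_def degree_def by auto
  then show ?thesis by blast
qed

theorem proposition3p17:
  fixes V :: "'a set" and E :: "'a \<Rightarrow> 'a \<Rightarrow> bool" and \<chi> :: "'a \<Rightarrow> color"
  assumes "tree V E" and "proper_2_coloring V E \<chi>"
  shows "(balanced V E \<longleftrightarrow>
            (\<forall>u\<in>V. \<forall>v\<in>V. height V E u = height V E v \<longrightarrow> \<chi> u = \<chi> v))
       \<and> ((\<forall>u\<in>V. \<forall>v\<in>V. height V E u = height V E v \<longrightarrow> \<chi> u = \<chi> v) \<longleftrightarrow>
            (\<forall>l l'. leaf V E l \<longrightarrow> leaf V E l' \<longrightarrow> \<chi> l = \<chi> l'))"
proof -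
  have sg: "simple_graph V E" and fin: "finite V" and conn: "connected_graph V E"
    using assms(1) unfolding tree_def simple_graph_def by auto
  have sym: "\<And>x y. E x y \<Longrightarrow> E y x" and irr: "\<And>x. \<not> E x x"
    and inV: "\<And>x y. E x y \<Longrightarrow> x \<in> V \<and> y \<in> V" using sg unfolding simple_graph_def by auto
  have col: "\<And>x y. E x y \<Longrightarrow> \<chi> x \<noteq> \<chi> y" using assms(2) unfolding proper_2_coloring_def by auto
  define Pc where "Pc = (\<lambda>x. \<chi> x = Red)"
  have Pc_eq: "\<chi> x = \<chi> y \<longleftrightarrow> (Pc x = Pc y)" for x y
    unfolding Pc_def by (cases "\<chi> x"; cases "\<chi> y"; simp)
  have Pc_adj: "\<And>x y. E x y \<Longrightarrow> Pc x \<noteq> Pc y" using col Pc_eq by blast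
  define h where "h = height V E"
  define L where "L = {l. leaf V E l}"
  have LV: "L \<subseteq> V" unfolding L_def leaf_def by auto
  have finL: "finite L" using LV fin finite_subset by auto
  have dist_walk: "\<exists>ws. walk V E ws \<and> hd ws = u \<and> last ws = v \<and> length ws = Suc (dist V E u v)"
    if uv0: "u \<in> V" "v \<in> V" for u v
  proof -
    obtain ws where ws: "walk V E ws" "hd ws = u" "last ws = v"
      using conn uv0 unfolding connected_graph_def by blast
    have "ws \<noteq> []" using ws(1) unfolding walk_def by simp
    then have "length ws = Suc (length ws - 1)" by simp
    then have "\<exists>n xs. walk V E xs \<and> hd xs = u \<and> last xs = v \<and> length xs = Suc n"
      using ws by blast
    then show ?thesis unfolding dist_def by (rule LeastI_ex)
  qed
  have dist_le: "dist V E u v \<le> length ws - 1"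
    if "walk V E ws" "hd ws = u" "last ws = v" for u v ws
  proof -
    have "ws \<noteq> []" using that unfolding walk_def by auto
    then have "\<exists>xs. walk V E xs \<and> hd xs = u \<and> last xs = v \<and> length xs = Suc (length ws - 1)"
      using that by (intro exI[of _ ws]) auto
    then show ?thesis unfolding dist_def by (rule Least_le)
  qed
  have h_le: "h u \<le> dist V E u l" if "l \<in> L" for u l
  proof -
    have "{l. leaf V E l} \<noteq> {}" using that unfolding L_def by auto
    then have "height V E u = Min (dist V E u ` {l. leaf V E l})" unfolding height_def by (rule if_not_P)
    then have "h u = Min (dist V E u ` L)" unfolding h_def L_def .
    then show ?thesis using finL that by (simp add: Min_le)
  qed
  have h_att: "\<exists>l\<in>L. h u = dist V E u l" if "L \<noteq> {}" for u
  proof -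
    have "{l. leaf V E l} \<noteq> {}" using that unfolding L_def by auto
    then have "height V E u = Min (dist V E u ` {l. leaf V E l})" unfolding height_def by (rule if_not_P)
    then have "h u = Min (dist V E u ` L)" unfolding h_def L_def .
    moreover have "Min (dist V E u ` L) \<in> dist V E u ` L" using that finL by (intro Min_in) auto
    ultimately show ?thesis by auto
  qed
  have h_noL: "h u = 0" if L0: "L = {}" for u
  proof -
    have "{l. leaf V E l} = {}" using L0 unfolding L_def .
    then show ?thesis unfolding h_def height_def by simp
  qed
  have h_leaf: "h l = 0" if "leaf V E l" for l
  proof -
    have "l \<in> L" "l \<in> V" using that unfolding L_def leaf_def by auto
    then have "h l \<le> dist V E l l" using h_le by blast
    moreover have "dist V E l l \<le> length [l] - 1"
      using dist_le[of "[l]" l l] walk_single[of V E l] \<open>l \<in> V\<close> by simp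
    ultimately have "h l \<le> 0" by simp
    then show ?thesis by simp
  qed
  have adj: "h u \<le> Suc (h v)" if e: "E u v" for u v
  proof (cases "L = {}")
    case True then show ?thesis using h_noL by simp
  next
    case False
    then obtain l where l: "l \<in> L" "h v = dist V E v l" using h_att by blast
    obtain ws where ws: "walk V E ws" "hd ws = v" "last ws = l" "length ws = Suc (h v)"
      using dist_walk[of v l] l LV inV[OF e] by auto
    have ne: "ws \<noteq> []" using ws by auto
    have "walk V E (u # ws)" using ws ne inV[OF e] e by (simp add: walk_Cons)
    then have "dist V E u l \<le> length (u # ws) - 1" using dist_le[of "u # ws" u l] ws ne by simp
    then show ?thesis using h_le[OF l(1), of u] ws by simp
  qed
  have A: "balanced V E \<longleftrightarrow> (\<forall>u\<in>V. \<forall>v\<in>V. h u = h v \<longrightarrow> \<chi> u = \<chi> v)"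
  proof
    assume b: "balanced V E"
    have par: "\<And>x y. E x y \<Longrightarrow> even (h x) \<noteq> even (h y)"
    proof -
      fix x y assume e: "E x y"
      have "h x \<noteq> h y" using b e unfolding balanced_def h_def by auto
      moreover have "h x \<le> Suc (h y)" "h y \<le> Suc (h x)" using adj e sym by auto
      ultimately have "h x = Suc (h y) \<or> h y = Suc (h x)" by linarith
      then show "even (h x) \<noteq> even (h y)" by auto
    qed
    show "\<forall>u\<in>V. \<forall>v\<in>V. h u = h v \<longrightarrow> \<chi> u = \<chi> v"
    proof (intro ballI impI)
      fix u v assume uv: "u \<in> V" "v \<in> V" "h u = h v"
      obtain ws where ws: "walk V E ws" "hd ws = u" "last ws = v"
        using conn uv unfolding connected_graph_def by blast
      have "odd (length ws)" using walk_parity'[where P="\<lambda>x. even (h x)", OF par ws(1)] ws uv by simp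
      then have "Pc u = Pc v" using walk_parity'[where P=Pc, OF Pc_adj ws(1)] ws by simp
      then show "\<chi> u = \<chi> v" using Pc_eq by simp
    qed
  next
    assume c: "\<forall>u\<in>V. \<forall>v\<in>V. h u = h v \<longrightarrow> \<chi> u = \<chi> v"
    show "balanced V E" unfolding balanced_def h_def[symmetric]
    proof (intro allI impI)
      fix u v assume e: "E u v"
      have "u \<in> V" "v \<in> V" using inV[OF e] by auto
      moreover have "\<chi> u \<noteq> \<chi> v" using col[OF e] .
      ultimately show "h u \<noteq> h v" using c by blast
    qed
  qed
  have B: "(\<forall>u\<in>V. \<forall>v\<in>V. h u = h v \<longrightarrow> \<chi> u = \<chi> v) \<longleftrightarrow>
            (\<forall>l l'. leaf V E l \<longrightarrow> leaf V E l' \<longrightarrow> \<chi> l = \<chi> l')"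
  proof
    assume c: "\<forall>u\<in>V. \<forall>v\<in>V. h u = h v \<longrightarrow> \<chi> u = \<chi> v"
    show "\<forall>l l'. leaf V E l \<longrightarrow> leaf V E l' \<longrightarrow> \<chi> l = \<chi> l'"
    proof (intro allI impI)
      fix l l' assume l: "leaf V E l" and l': "leaf V E l'"
      have "l \<in> V" "l' \<in> V" using l l' unfolding leaf_def by auto
      moreover have "h l = h l'" using h_leaf[OF l] h_leaf[OF l'] by simp
      ultimately show "\<chi> l = \<chi> l'" using c by blast
    qed
  next
    assume c: "\<forall>l l'. leaf V E l \<longrightarrow> leaf V E l' \<longrightarrow> \<chi> l = \<chi> l'"
    show "\<forall>u\<in>V. \<forall>v\<in>V. h u = h v \<longrightarrow> \<chi> u = \<chi> v"
    proof (cases "L = {}")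
      case True
      have noE: "\<not> E x y" for x y
      proof
        assume "E x y"
        then obtain l where "leaf V E l" using tree_has_leaf[OF assms(1)] by blast
        then have "l \<in> L" unfolding L_def by simp
        then show False using True by simp
      qed
      show ?thesis
      proof (intro ballI impI)
        fix u v assume uv: "u \<in> V" "v \<in> V" "h u = h v"
        obtain ws where ws: "walk V E ws" "hd ws = u" "last ws = v"
          using conn uv unfolding connected_graph_def by blast
        have "length ws = 1"
        proof (rule ccontr)
          assume "length ws \<noteq> 1"
          then have "Suc 0 < length ws" using ws unfolding walk_def by (cases ws) auto
          moreover have "Suc 0 < length ws \<longrightarrow> E (ws ! 0) (ws ! Suc 0)" using ws(1) unfolding walk_def by blast
          ultimately show False using noE by blast
        qed
        then have "u = v" using ws by (cases ws) auto
        then show "\<chi> u = \<chi> v" by simp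
      qed
    next
      case False
      then obtain l0 where l0: "l0 \<in> L" by blast
      have key: "(Pc u = Pc l0) \<longleftrightarrow> even (h u)" if uV: "u \<in> V" for u
      proof -
        obtain l where l: "l \<in> L" "h u = dist V E u l" using h_att False by blast
        obtain ws where ws: "walk V E ws" "hd ws = u" "last ws = l" "length ws = Suc (h u)"
          using dist_walk[of u l] l LV uV by auto
        have "(Pc u = Pc l) \<longleftrightarrow> even (h u)" using walk_parity'[where P=Pc, OF Pc_adj ws(1)] ws by simp
        moreover have "leaf V E l" "leaf V E l0" using l(1) l0 unfolding L_def by simp_all
        then have "\<chi> l = \<chi> l0" using c by blast
        ultimately show ?thesis using Pc_eq by simp
      qed
      show ?thesis
      proof (intro ballI impI)
        fix u v assume uv: "u \<in> V" "v \<in> V" "h u = h v"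
        have ka: "(Pc u = Pc l0) = even (h u)" using key[OF uv(1)] .
        have kb: "(Pc v = Pc l0) = even (h v)" using key[OF uv(2)] .
        have "(Pc u = Pc l0) = (Pc v = Pc l0)" using ka kb uv(3) by simp
        then have "Pc u = Pc v" by (cases "Pc u"; cases "Pc v"; cases "Pc l0"; simp)
        then show "\<chi> u = \<chi> v" using Pc_eq by simp
      qed
    qed
  qed
  show ?thesis using A B unfolding h_def by simp
qed

end
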